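(* Let $X$ be a real normed vector space, $Y$ a $\mathbb{Q}$-vector space, $f:X\to Y$, $s\ge1$, $\varepsilon>0$, and $B=\{x\in X:\|x\|_X<\varepsilon\}$. If $\Delta_h^sf(x)=0$ for all $x\in X$ and all $h\in B$, then $\Delta_{h_1h_2\cdots h_s}f(x)=0$ for all $(x,h_1,\dots,h_s)\in X^{s+1}$.
   Context: For $h\in X$, $\Delta_hf(x)=f(x+h)-f(x)$; $\Delta_{h_1h_2\cdots h_s}f(x)=\Delta_{h_1}\left(\Delta_{h_2\cdots h_s}f\right)(x)$ for $s\ge 2$; and $\Delta_h^sf(x)=\sum_{k=0}^s\binom{s}{k}(-1)^{s-k}f(x+kh)$. *)

theory Defs
  imports Complex_Main
begin

definition fdiff :: "'a::real_vector \<Rightarrow> ('a \<Rightarrow> 'b::ab_group_add) \<Rightarrow> 'a \<Rightarrow> 'b" where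
  "fdiff h f x = f (x + h) - f x"

fun fdiffs :: "'a::real_vector list \<Rightarrow> ('a \<Rightarrow> 'b::ab_group_add) \<Rightarrow> 'a \<Rightarrow> 'b" where
  "fdiffs [] f = f"
| "fdiffs (h # hs) f = fdiff h (fdiffs hs f)"

text \<open>s-th power difference: sum_{k=0}^s binom(s,k) (-1)^(s-k) f(x + k h), where the
  integer coefficients act on the Q-vector space Y through its rational scalar multiplication.\<close>
definition fdiff_pow ::
  "(rat \<Rightarrow> 'b::ab_group_add \<Rightarrow> 'b) \<Rightarrow> nat \<Rightarrow> 'a::real_vector \<Rightarrow> ('a \<Rightarrow> 'b) \<Rightarrow> 'a \<Rightarrow> 'b" where
  "fdiff_pow scale s h f x =
     (\<Sum>k = 0..s. scale (of_nat (s choose k) * (-1) ^ (s - k)) (f (x + of_nat k *\<^sub>R h)))"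

end

theory Submission
  imports Defs
begin

fun Dl :: "'a::real_vector list \<Rightarrow> ('a \<Rightarrow> 'b::ab_group_add) \<Rightarrow> 'b" where
  "Dl [] g = g 0"
| "Dl (h # hs) g = Dl hs (\<lambda>y. g (y + h)) - Dl hs g"

fun El :: "('a::real_normed_vector \<times> 'a) list \<Rightarrow> ('a \<Rightarrow> 'a \<Rightarrow> 'b::ab_group_add) \<Rightarrow> 'b" where
  "El [] G = G 0 0"
| "El ((a, b) # ps) G = El ps (\<lambda>\<beta> \<alpha>. G (\<beta> + a) (\<alpha> + b)) - El ps G"

lemma fdiffs_Dl: "fdiffs hs f x = Dl hs (\<lambda>y. f (x + y))"
proof (induction hs arbitrary: x)
  case Nil then show ?case by simp
next
  case (Cons h hs)
  have "fdiffs (h # hs) f x = fdiffs hs f (x + h) - fdiffs hs f x"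
    by (simp add: fdiff_def)
  also have "\<dots> = Dl hs (\<lambda>y. f (x + h + y)) - Dl hs (\<lambda>y. f (x + y))"
    using Cons by simp
  also have "(\<lambda>y. f (x + h + y)) = (\<lambda>y. f (x + (y + h)))"
    by (simp add: add_ac)
  finally show ?case by simp
qed

lemma Dl_zero: "0 \<in> set hs \<Longrightarrow> Dl hs g = 0"
  by (induction hs arbitrary: g) auto

lemma El_bound:
  "(\<And>\<beta> \<alpha>. norm \<alpha> \<le> sum_list (map (\<lambda>p. norm (snd p)) ps) \<Longrightarrow> G \<beta> \<alpha> = 0) \<Longrightarrow> El ps G = 0"
proof (induction ps arbitrary: G)
  case Nil then show ?case by simp
next
  case (Cons p ps)
  obtain a b where p: "p = (a, b)" by fastforce
  let ?S = "sum_list (map (\<lambda>p. norm (snd p)) ps)"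
  have h: "\<And>\<beta> \<alpha>. norm \<alpha> \<le> norm b + ?S \<Longrightarrow> G \<beta> \<alpha> = 0" using Cons.prems p by simp
  have S0: "?S \<ge> 0" by (induction ps) auto
  have 1: "El ps (\<lambda>\<beta> \<alpha>. G (\<beta> + a) (\<alpha> + b)) = 0"
  proof (rule Cons.IH)
    fix \<beta> \<alpha> :: 'a assume "norm \<alpha> \<le> ?S"
    then have "norm (\<alpha> + b) \<le> norm b + ?S" using norm_triangle_ineq[of \<alpha> b] by linarith
    then show "G (\<beta> + a) (\<alpha> + b) = 0" by (rule h)
  qed
  have 2: "El ps G = 0"
    by (rule Cons.IH) (rule h, use norm_ge_zero[of b] in linarith)
  show ?case using 1 2 p by simp
qed

lemma El_diff: "El ps (\<lambda>\<beta> \<alpha>. G \<beta> \<alpha> - H \<beta> \<alpha>) = El ps G - El ps H"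
  by (induction ps arbitrary: G H) (auto simp: algebra_simps)

lemma El_sum:
  "El ps (\<lambda>\<beta> \<alpha>. \<Sum>k\<in>K. G k \<beta> \<alpha>) = (\<Sum>k\<in>K. El ps (G k))"
proof (induction ps arbitrary: G)
  case Nil then show ?case by simp
next
  case (Cons p ps)
  obtain a b where p: "p = (a, b)" by fastforce
  show ?case using Cons p by (simp add: sum_subtractf)
qed

lemma El_scale:
  assumes "vector_space scale"
  shows "El ps (\<lambda>\<beta> \<alpha>. scale c (G \<beta> \<alpha>)) = scale c (El ps G)"
proof -
  interpret V: vector_space scale by fact
  show ?thesis
  proof (induction ps arbitrary: G)
    case Nil then show ?case by simp
  next
    case (Cons p ps)
    obtain a b where p: "p = (a, b)" by fastforce
    show ?case using Cons p by (simp add: V.scale_right_diff_distrib)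
  qed
qed

lemma El_Dl: "El ps (\<lambda>\<beta> \<alpha>. g (\<beta> + t *\<^sub>R \<alpha>)) = Dl (map (\<lambda>(a, b). a + t *\<^sub>R b) ps) g"
proof (induction ps arbitrary: g)
  case Nil then show ?case by simp
next
  case (Cons p ps)
  obtain a b where p: "p = (a, b)" by fastforce
  have "(\<lambda>\<beta> \<alpha>. g (\<beta> + a + t *\<^sub>R (\<alpha> + b))) = (\<lambda>\<beta> \<alpha>. (\<lambda>y. g (y + (a + t *\<^sub>R b))) (\<beta> + t *\<^sub>R \<alpha>))"
    by (simp add: algebra_simps)
  then show ?case using Cons p by simp
qed

lemma small_case:
  fixes scale :: "rat \<Rightarrow> 'b::ab_group_add \<Rightarrow> 'b"
    and f :: "'a::real_normed_vector \<Rightarrow> 'b"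
  assumes vs: "vector_space scale" and s: "s \<ge> 1" and len: "length hs = s"
    and hyp: "\<And>x \<alpha>. norm \<alpha> < \<epsilon> \<Longrightarrow> fdiff_pow scale s \<alpha> f x = 0"
    and small: "\<forall>k\<in>set hs. norm k < \<epsilon> / real s"
  shows "fdiffs hs f x = 0"
proof -
  interpret V: vector_space scale by fact
  define ps where "ps = map (\<lambda>i. (hs ! i, (- (1 / (real i + 1))) *\<^sub>R hs ! i)) [0..<s]"
  define c where "c = (\<lambda>k. of_nat (s choose k) * (-1) ^ (s - k) :: rat)"
  define g where "g = (\<lambda>y. f (x + y))"
  define ms where "ms = (\<lambda>k::nat. map (\<lambda>(a, b). a + real k *\<^sub>R b) ps)"
  have bound: "sum_list (map (\<lambda>p. norm (snd p)) ps) < \<epsilon>"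
  proof -
    have "sum_list (map (\<lambda>p. norm (snd p)) ps) = (\<Sum>i\<in>{0..<s}. norm (hs ! i) / (real i + 1))"
      unfolding ps_def by (simp add: sum_list_distinct_conv_sum_set o_def divide_inverse mult.commute)
    also have "\<dots> < (\<Sum>i\<in>{0..<s}. \<epsilon> / real s)"
    proof (rule sum_strict_mono)
      fix i assume "i \<in> {0..<s}"
      then have "hs ! i \<in> set hs" using len by auto
      then have "norm (hs ! i) < \<epsilon> / real s" using small by auto
      moreover have "norm (hs ! i) / (real i + 1) \<le> norm (hs ! i)"
      proof -
        have "norm (hs ! i) * 1 \<le> norm (hs ! i) * (real i + 1)"
          by (rule mult_left_mono) auto
        then show ?thesis by (simp add: divide_le_eq)
      qed
      ultimately show "norm (hs ! i) / (real i + 1) < \<epsilon> / real s" by linarith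
    qed (use s in auto)
    also have "\<dots> = \<epsilon>" using s by simp
    finally show ?thesis .
  qed
  have E0: "El ps (\<lambda>\<beta> \<alpha>. fdiff_pow scale s \<alpha> f (x + \<beta>)) = 0"
    by (rule El_bound) (rule hyp, use bound in linarith)
  have "El ps (\<lambda>\<beta> \<alpha>. fdiff_pow scale s \<alpha> f (x + \<beta>))
      = El ps (\<lambda>\<beta> \<alpha>. \<Sum>k = 0..s. scale (c k) (g (\<beta> + real k *\<^sub>R \<alpha>)))"
    unfolding fdiff_pow_def c_def g_def by (simp add: add.assoc)
  also have "\<dots> = (\<Sum>k = 0..s. scale (c k) (Dl (ms k) g))"
    by (simp add: El_sum El_scale[OF vs] El_Dl ms_def)
  also have "\<dots> = scale (c 0) (Dl (ms 0) g) + (\<Sum>k = 1..s. scale (c k) (Dl (ms k) g))"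
    by (simp add: sum.atLeast_Suc_atMost)
  also have "(\<Sum>k = 1..s. scale (c k) (Dl (ms k) g)) = 0"
  proof (rule sum.neutral, rule ballI)
    fix k assume k: "k \<in> {1..s}"
    have lt: "k - 1 < s" using k by (simp; arith)
    have kk: "real (k - 1) + 1 = real k" using k by (simp add: of_nat_diff)
    have "ms k ! (k - 1) = hs ! (k - 1) + real k *\<^sub>R ((- (1 / (real (k - 1) + 1))) *\<^sub>R hs ! (k - 1))"
    proof -
      show ?thesis unfolding ms_def ps_def using lt by (simp del: One_nat_def)
    qed
    also have "\<dots> = 0" using kk k by simp
    finally have "ms k ! (k - 1) = 0" .
    moreover have "k - 1 < length (ms k)" using lt by (simp add: ms_def ps_def)
    ultimately have "0 \<in> set (ms k)" by (metis nth_mem)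
    then show "scale (c k) (Dl (ms k) g) = 0" by (simp add: Dl_zero)
  qed
  also have "ms 0 = hs" using len
    unfolding ms_def ps_def by (simp add: o_def) (metis map_nth)
  finally have "scale (c 0) (Dl hs g) = 0" using E0 by simp
  then have "scale (c 0) (scale (c 0) (Dl hs g)) = 0" by simp
  moreover have "c 0 * c 0 = 1" by (simp add: c_def flip: power_add) 
  ultimately have "Dl hs g = 0" by simp
  then show ?thesis by (simp add: fdiffs_Dl g_def)
qed

lemma fdiff_comm: "fdiff h (fdiff k G) = fdiff k (fdiff h G)"
  by (rule ext) (simp add: fdiff_def algebra_simps)

lemma fdiffs_comm: "fdiff h (fdiffs hs F) = fdiffs hs (fdiff h F)"
  by (induction hs) (simp_all add: fdiff_comm)

lemma invariance:
  fixes H :: "'a::real_normed_vector \<Rightarrow> 'b"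
  assumes "\<delta> > 0" and inv: "\<And>x k. norm k < \<delta> \<Longrightarrow> H (x + k) = H x"
  shows "H (x + k) = H x"
proof -
  obtain N :: nat where N: "norm k / \<delta> < real N" using reals_Archimedean2 by blast
  then have Npos: "real N > 0" using assms(1) by (smt (verit) divide_nonneg_pos norm_ge_zero)
  define k' where "k' = (1 / real N) *\<^sub>R k"
  have "norm k' < \<delta>" using N Npos assms(1)
    by (simp add: k'_def field_simps)
  then have step: "\<And>m. H (x + real m *\<^sub>R k') = H x"
  proof -
    fix m
    show "H (x + real m *\<^sub>R k') = H x"
    proof (induction m)
      case 0 then show ?case by simp
    next
      case (Suc m)
      have "H (x + real (Suc m) *\<^sub>R k') = H ((x + real m *\<^sub>R k') + k')"
        by (simp add: algebra_simps)
      also have "\<dots> = H (x + real m *\<^sub>R k')" by (rule inv) fact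
      finally show ?case using Suc by simp
    qed
  qed
  have "real N *\<^sub>R k' = k" using Npos by (simp add: k'_def)
  then show ?thesis using step[of N] by simp
qed

lemma extend:
  fixes hs :: "'a::real_normed_vector list" and F :: "'a \<Rightarrow> 'b::ab_group_add"
  assumes "\<delta> > 0"
    and "\<And>(ks::'a list) y. length ks = length hs \<Longrightarrow> (\<forall>k\<in>set ks. norm k < \<delta>) \<Longrightarrow> fdiffs ks F y = 0"
  shows "fdiffs hs F x = 0"
  using assms(2)
proof (induction hs arbitrary: F x)
  case Nil then show ?case by force
next
  case (Cons h hs)
  define H where "H = fdiffs hs F"
  have inv: "H (y + k) = H y" if "norm k < \<delta>" for y k
  proof -
    have "fdiffs hs (fdiff k F) y = 0"
    proof (rule Cons.IH)
      fix ks :: "'a list" and z assume "length ks = length hs" "\<forall>k\<in>set ks. norm k < \<delta>"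
      then have "fdiffs (k # ks) F z = 0" using Cons.prems[of "k # ks" z] that by simp
      then show "fdiffs ks (fdiff k F) z = 0" by (simp add: fdiffs_comm)
    qed
    then have "fdiff k H y = 0" by (simp add: H_def fdiffs_comm)
    then show ?thesis by (simp add: fdiff_def)
  qed
  have "H (x + h) = H x" by (rule invariance[OF assms(1) inv])
  then show ?case by (simp add: H_def fdiff_def)
qed

theorem theorem5:
  fixes scale :: "rat \<Rightarrow> 'b::ab_group_add \<Rightarrow> 'b"
    and f :: "'a::real_normed_vector \<Rightarrow> 'b"
    and s :: nat and \<epsilon> :: real
  assumes "vector_space scale"
    and "s \<ge> 1" and "\<epsilon> > 0"
    and "\<forall>x. \<forall>h \<in> {h. norm h < \<epsilon>}. fdiff_pow scale s h f x = 0"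
  shows "\<forall>x. \<forall>hs. length hs = s \<longrightarrow> fdiffs hs f x = 0"
proof (intro allI impI)
  fix x and hs :: "'a list" assume len: "length hs = s"
  have d: "\<epsilon> / real s > 0" using assms(2,3) by simp
  show "fdiffs hs f x = 0"
  proof (rule extend[OF d])
    fix ks :: "'a list" and y assume "length ks = length hs" "\<forall>k\<in>set ks. norm k < \<epsilon> / real s"
    then show "fdiffs ks f y = 0"
      using small_case[OF assms(1) assms(2), of ks \<epsilon> f y] assms(4) len by auto
  qed
qed

end
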